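(* Let $N, P, M, K, C$ be positive integers such that $M$ divides $P$ and $C$ divides $M$; put $S = P/M$ and $M' = M/C$ (so that $P/M' = CS$). Let $\mathbf{x}_1,\dots,\mathbf{x}_N\in\mathbb{R}^P$ be fixed data points. For blocks $\mathbf{v}^1,\dots,\mathbf{v}^L$ write $[\mathbf{v}^1;\dots;\mathbf{v}^L]$ for their vertical concatenation. In what follows $\mathbf{R}$ ranges over real $P\times P$ matrices with $\mathbf{R}^T\mathbf{R}=\mathbf{I}$, and code constraints are imposed for all indices. Define the CKM optimal value with $M$ subvectors $$f^*_{\mathrm{ck},M,K} = \inf \sum_{i=1}^N \big\|\mathbf{x}_i - \mathbf{R}[\mathbf{D}^1\mathbf{b}_i^1;\dots;\mathbf{D}^M\mathbf{b}_i^M]\big\|_2^2,$$ the infimum over $\mathbf{R}$, $\mathbf{D}^m\in\mathbb{R}^{S\times K}$ ($m=1,\dots,M$), and $\mathbf{b}_i^m\in\{0,1\}^K$ with $\|\mathbf{b}_i^m\|_1=1$. Define the OCKM optimal value with $M'$ subvectors (each of dimension $CS$) $$f^*_{\mathrm{ock},M',K,C} = \inf \sum_{i=1}^N \big\|\mathbf{x}_i - \mathbf{R}[\textstyle\sum_{c=1}^C\mathbf{D}^{1,c}\mathbf{b}_i^{1,c};\dots;\sum_{c=1}^C\mathbf{D}^{M',c}\mathbf{b}_i^{M',c}]\big\|_2^2,$$ the infimum over $\mathbf{R}$, $\mathbf{D}^{p,c}\in\mathbb{R}^{CS\times K}$ ($p=1,\dots,M'$, $c=1,\dots,C$), and $\mathbf{b}_i^{p,c}\in\{0,1\}^K$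 with $\|\mathbf{b}_i^{p,c}\|_1=1$. Then $f^*_{\mathrm{ock},M',K,C} \le f^*_{\mathrm{ck},M,K}$.
   Context: $\|\cdot\|_2$ is the Euclidean norm and $\|\cdot\|_1$ the $\ell_1$ norm. These are the optimal distortion errors of Cartesian $K$-means (CKM) and optimized Cartesian $K$-means (OCKM); under the stated choices both encodings use code length $M\log_2 K$ bits. *)

theory Defs
  imports Main "HOL.Real"
begin

text \<open>Vectors of R^n are functions nat => real (only indices < n matter);
  matrices are nat => nat => real (row, column), indices 0-based.\<close>

definition orth_mat :: "nat \<Rightarrow> (nat \<Rightarrow> nat \<Rightarrow> real) \<Rightarrow> bool" where
  "orth_mat P R \<longleftrightarrow> (\<forall>i<P. \<forall>j<P. (\<Sum>k<P. R k i * R k j) = (if i = j then 1 else 0))"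

definition onehot :: "nat \<Rightarrow> (nat \<Rightarrow> real) \<Rightarrow> bool" where
  "onehot K b \<longleftrightarrow> (\<forall>k<K. b k \<in> {0, 1}) \<and> (\<Sum>k<K. \<bar>b k\<bar>) = 1"

definition mat_vec :: "nat \<Rightarrow> (nat \<Rightarrow> nat \<Rightarrow> real) \<Rightarrow> (nat \<Rightarrow> real) \<Rightarrow> nat \<Rightarrow> real" where
  "mat_vec P R y = (\<lambda>r. \<Sum>j<P. R r j * y j)"

definition sqdist :: "nat \<Rightarrow> (nat \<Rightarrow> real) \<Rightarrow> (nat \<Rightarrow> real) \<Rightarrow> real" where
  "sqdist P u v = (\<Sum>r<P. (u r - v r)\<^sup>2)"

text \<open>CKM: M blocks of dimension S = P div M; block m occupies indices m*S ..< (m+1)*S.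
  D m is the S x K codebook of block m, b i m the code of point i in block m.\<close>
definition ckm_recon :: "nat \<Rightarrow> nat \<Rightarrow> (nat \<Rightarrow> nat \<Rightarrow> nat \<Rightarrow> real) \<Rightarrow> (nat \<Rightarrow> nat \<Rightarrow> real) \<Rightarrow> nat \<Rightarrow> real" where
  "ckm_recon S K D bi = (\<lambda>j. \<Sum>k<K. D (j div S) (j mod S) k * bi (j div S) k)"

definition ckm_opt :: "nat \<Rightarrow> nat \<Rightarrow> nat \<Rightarrow> nat \<Rightarrow> (nat \<Rightarrow> nat \<Rightarrow> real) \<Rightarrow> real" where
  "ckm_opt N P M K x = Inf {(\<Sum>i<N. sqdist P (x i) (mat_vec P R (ckm_recon (P div M) K D (b i)))) | R D b.
      orth_mat P R \<and> (\<forall>i<N. \<forall>m<M. onehot K (b i m))}"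

definition ockm_recon :: "nat \<Rightarrow> nat \<Rightarrow> nat \<Rightarrow> (nat \<Rightarrow> nat \<Rightarrow> nat \<Rightarrow> nat \<Rightarrow> real) \<Rightarrow> (nat \<Rightarrow> nat \<Rightarrow> nat \<Rightarrow> real) \<Rightarrow> nat \<Rightarrow> real" where
  "ockm_recon T C K D bi = (\<lambda>j. \<Sum>c<C. \<Sum>k<K. D (j div T) c (j mod T) k * bi (j div T) c k)"

definition ockm_opt :: "nat \<Rightarrow> nat \<Rightarrow> nat \<Rightarrow> nat \<Rightarrow> nat \<Rightarrow> (nat \<Rightarrow> nat \<Rightarrow> real) \<Rightarrow> real" where
  "ockm_opt N P Mp K C x = Inf {(\<Sum>i<N. sqdist P (x i) (mat_vec P R (ockm_recon (P div Mp) C K D (b i)))) | R D b.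
      orth_mat P R \<and> (\<forall>i<N. \<forall>p<Mp. \<forall>c<C. onehot K (b i p c))}"

end

theory Submission
  imports Defs
begin

lemma idx_lemma:
  fixes j S C :: nat
  assumes "0 < S"
  shows "(j div (S*C)) * C + (j mod (S*C)) div S = j div S"
    and "(j mod (S*C)) mod S = j mod S"
    and "0 < C \<Longrightarrow> (j mod (S*C)) div S < C"
proof -
  have m: "j mod (S*C) = S * (j div S mod C) + j mod S" by (rule mod_mult2_eq)
  have d: "(j mod (S*C)) div S = j div S mod C"
    using assms by (simp add: m)
  show "(j div (S*C)) * C + (j mod (S*C)) div S = j div S"
    by (simp add: d div_mult2_eq)
  show "(j mod (S*C)) mod S = j mod S" by (simp add: m)
  show "0 < C \<Longrightarrow> (j mod (S*C)) div S < C" by (simp add: d)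
qed

theorem theorem2:
  fixes N P M K C :: nat and x :: "nat \<Rightarrow> nat \<Rightarrow> real"
  assumes "0 < N" "0 < P" "0 < M" "0 < K" "0 < C" "M dvd P" "C dvd M"
  shows "ockm_opt N P (M div C) K C x \<le> ckm_opt N P M K x"
proof -
  define S where "S = P div M"
  define Mp where "Mp = M div C"
  have PS: "P = M * S" using assms(6) by (simp add: S_def)
  have MC: "M = Mp * C" using assms(7) by (simp add: Mp_def)
  have Spos: "0 < S" using assms(2) PS by (cases S) auto
  have T: "P div Mp = S * C"
  proof -
    have "Mp > 0" using assms(3) MC by (cases Mp) auto
    then show ?thesis using PS MC by (simp add: mult.commute mult.left_commute)
  qed
  define A where "A = {(\<Sum>i<N. sqdist P (x i) (mat_vec P R (ockm_recon (P div Mp) C K D (b i)))) | R D b.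
      orth_mat P R \<and> (\<forall>i<N. \<forall>p<Mp. \<forall>c<C. onehot K (b i p c))}"
  define B where "B = {(\<Sum>i<N. sqdist P (x i) (mat_vec P R (ckm_recon (P div M) K D (b i)))) | R D b.
      orth_mat P R \<and> (\<forall>i<N. \<forall>m<M. onehot K (b i m))}"
  have Bne: "B \<noteq> {}"
  proof -
    define R0 :: "nat \<Rightarrow> nat \<Rightarrow> real" where "R0 = (\<lambda>i j. if i = j then 1 else 0)"
    define b0 :: "nat \<Rightarrow> nat \<Rightarrow> nat \<Rightarrow> real" where "b0 = (\<lambda>i m k. if k = 0 then 1 else 0)"
    have "orth_mat P R0" unfolding orth_mat_def R0_def
      by (auto simp: if_distrib[of "\<lambda>z. z * _"] cong: if_cong)
    moreover have "\<forall>i<N. \<forall>m<M. onehot K (b0 i m)"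
      unfolding onehot_def b0_def using assms(4)
      by (auto simp: if_distrib[of abs] cong: if_cong)
    ultimately show ?thesis unfolding B_def by blast
  qed
  have Abdd: "bdd_below A"
    unfolding A_def bdd_below_def
    by (rule exI[of _ 0]) (auto simp: sqdist_def intro!: sum_nonneg)
  have sub: "B \<subseteq> A"
  proof
    fix y assume "y \<in> B"
    then obtain R D b where y: "y = (\<Sum>i<N. sqdist P (x i) (mat_vec P R (ckm_recon (P div M) K D (b i))))"
      and R: "orth_mat P R" and bo: "\<forall>i<N. \<forall>m<M. onehot K (b i m)"
      unfolding B_def by blast
    define b' where "b' = (\<lambda>i p c. b i (p*C + c))"
    define D' where "D' = (\<lambda>p c t k. if t div S = c then D (p*C+c) (t mod S) k else 0)"
    have b'o: "\<forall>i<N. \<forall>p<Mp. \<forall>c<C. onehot K (b' i p c)"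
    proof (intro allI impI)
      fix i p c assume "i < N" "p < Mp" "c < C"
      have "p*C + c < Mp * C"
      proof -
        have "p*C + c < p*C + C" using \<open>c < C\<close> by simp
        also have "\<dots> = Suc p * C" by simp
        also have "\<dots> \<le> Mp * C" using \<open>p < Mp\<close> by (intro mult_right_mono) auto
        finally show ?thesis .
      qed
      then show "onehot K (b' i p c)" using bo \<open>i < N\<close> MC by (simp add: b'_def)
    qed
    have eq: "ockm_recon (P div Mp) C K D' (b' i) = ckm_recon (P div M) K D (b i)" for i
    proof
      fix j
      let ?c0 = "(j mod (S*C)) div S"
      have c0: "?c0 < C" using idx_lemma(3)[OF Spos assms(5)] .
      have "ockm_recon (P div Mp) C K D' (b' i) j =
          (\<Sum>c<C. \<Sum>k<K. (if ?c0 = c then D ((j div (S*C))*C+c) ((j mod (S*C)) mod S) k else 0)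
             * b i ((j div (S*C))*C + c) k)"
        unfolding ockm_recon_def T D'_def b'_def by simp
      also have "\<dots> = (\<Sum>c<C. if c = ?c0 then (\<Sum>k<K. D ((j div (S*C))*C+c) ((j mod (S*C)) mod S) k
             * b i ((j div (S*C))*C + c) k) else 0)"
        by (intro sum.cong) auto
      also have "\<dots> = (\<Sum>k<K. D ((j div (S*C))*C+?c0) ((j mod (S*C)) mod S) k
             * b i ((j div (S*C))*C + ?c0) k)"
        using c0 by (simp add: sum.delta)
      also have "\<dots> = ckm_recon (P div M) K D (b i) j"
        unfolding ckm_recon_def S_def[symmetric]
        using idx_lemma(1,2)[OF Spos, of j C] by simp
      finally show "ockm_recon (P div Mp) C K D' (b' i) j = ckm_recon (P div M) K D (b i) j" .
    qed
    show "y \<in> A" unfolding A_def y eq[symmetric] using R b'o by blast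
  qed
  have "Inf A \<le> Inf B" by (rule cInf_superset_mono[OF Bne Abdd sub])
  then show ?thesis unfolding ockm_opt_def ckm_opt_def A_def B_def Mp_def .
qed

end
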